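(* Let $\alpha\in\mathbb{R}$, $t\in\mathbb{R}$ and assume $Q+\alpha-2>0$. Then for every $r>0$ and every $\phi\in C_0^\infty(B_r)$, $$\int_{B_r}\rho^{\alpha}|\nabla_\gamma\rho|^t|\nabla_\gamma\phi|^2\,dz\ \ge\ \Big(\frac{Q+\alpha-2}{2}\Big)^2\int_{B_r}\rho^{\alpha-2}|\nabla_\gamma\rho|^{t+2}\phi^2\,dz+\frac14\int_{B_r}\rho^{\alpha-2}|\nabla_\gamma\rho|^{t+2}\frac{\phi^2}{\big(\ln\frac{r}{\rho}\big)^2}\,dz .$$
   Context: Points of $\mathbb{R}^n$ are written $z=(x,y)$ with $x\in\mathbb{R}^m$, $y\in\mathbb{R}^k$, $m,k\ge1$, $n=m+k$, and $\gamma>0$. The Baouendi–Grushin gradient is $\nabla_\gamma=(\partial_{x_1},\dots,\partial_{x_m},|x|^\gamma\partial_{y_1},\dots,|x|^\gamma\partial_{y_k})$. The homogeneous dimension is $Q=m+(1+\gamma)k$. The gauge is $\rho(z)=\big(|x|^{2(1+\gamma)}+(1+\gamma)^2|y|^2\big)^{\frac{1}{2(1+\gamma)}}$; one has $|\nabla_\gamma\rho|=|x|^\gamma/\rho^\gamma$. For $r>0$, $B_r=\{z\in\mathbb{R}^n:\rho(z)<r\}$. The integral on the left-hand side is allowed to be $+\infty$. *)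

theory Defs
  imports "HOL-Analysis.Analysis"
begin

fun Ck_fun :: "nat \<Rightarrow> ('a::euclidean_space \<Rightarrow> real) \<Rightarrow> bool" where
  "Ck_fun 0 f = continuous_on UNIV f"
| "Ck_fun (Suc k) f = (continuous_on UNIV f \<and> f differentiable_on UNIV \<and>
      (\<forall>v. Ck_fun k (\<lambda>z. frechet_derivative f (at z) v)))"

definition smooth_fun :: "('a::euclidean_space \<Rightarrow> real) \<Rightarrow> bool" where
  "smooth_fun f \<longleftrightarrow> (\<forall>k. Ck_fun k f)"

definition C0_infty :: "'a::euclidean_space set \<Rightarrow> ('a \<Rightarrow> real) \<Rightarrow> bool" where
  "C0_infty U f \<longleftrightarrow> smooth_fun f \<and> compact (closure {z. f z \<noteq> 0})
      \<and> closure {z. f z \<noteq> 0} \<subseteq> U"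

text \<open>Points z = (x,y) with x in R^m, y in R^k (m = CARD('m), k = CARD('k)).\<close>
definition hom_dim :: "real \<Rightarrow> 'm::finite itself \<Rightarrow> 'k::finite itself \<Rightarrow> real" where
  "hom_dim \<gamma> _ _ = real CARD('m) + (1 + \<gamma>) * real CARD('k)"

definition gauge :: "real \<Rightarrow> (real^'m) \<times> (real^'k) \<Rightarrow> real" where
  "gauge \<gamma> z = (norm (fst z) powr (2 * (1 + \<gamma>)) + (1 + \<gamma>)\<^sup>2 * (norm (snd z))\<^sup>2)
                 powr (1 / (2 * (1 + \<gamma>)))"

definition gauge_ball :: "real \<Rightarrow> real \<Rightarrow> ((real^'m) \<times> (real^'k)) set" where
  "gauge_ball \<gamma> r = {z. gauge \<gamma> z < r}"

text \<open>|\<nabla>_\<gamma> \<rho>| = |x|^\<gamma> / \<rho>^\<gamma> (the formula given in the paper; defined off a null set).\<close>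
definition grad_gauge_norm :: "real \<Rightarrow> (real^'m) \<times> (real^'k) \<Rightarrow> real" where
  "grad_gauge_norm \<gamma> z = norm (fst z) powr \<gamma> / gauge \<gamma> z powr \<gamma>"

definition grushin_grad_sq ::
  "real \<Rightarrow> ((real^'m) \<times> (real^'k) \<Rightarrow> real) \<Rightarrow> (real^'m) \<times> (real^'k) \<Rightarrow> real" where
  "grushin_grad_sq \<gamma> f z =
     (\<Sum>i\<in>UNIV. (frechet_derivative f (at z) (axis i 1, 0))\<^sup>2)
     + norm (fst z) powr (2 * \<gamma>) *
       (\<Sum>j\<in>UNIV. (frechet_derivative f (at z) (0, axis j 1))\<^sup>2)"

end

theory Submission
  imports Defs
begin


definition dil :: "real \<Rightarrow> real \<Rightarrow> (real^'m::finite) \<times> (real^'k::finite) \<Rightarrow> (real^'m) \<times> (real^'k)" where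
  "dil \<gamma> s z = (s *\<^sub>R fst z, (s powr (1+\<gamma>)) *\<^sub>R snd z)"

lemma gauge_nonneg: "gauge \<gamma> z \<ge> 0" by (simp add: gauge_def)

lemma gauge_dil:
  assumes g: "\<gamma> > 0" and s: "s > 0"
  shows "gauge \<gamma> (dil \<gamma> s z) = s * gauge \<gamma> z"
proof -
  let ?p = "2 * (1 + \<gamma>)"
  have a: "norm (s *\<^sub>R fst z) powr ?p = s powr ?p * norm (fst z) powr ?p"
    using s by (simp add: powr_mult)
  have b0: "(s powr (1+\<gamma>))\<^sup>2 = s powr ?p"
    using s by (simp add: power2_eq_square powr_add[symmetric])
  have b: "(norm ((s powr (1+\<gamma>)) *\<^sub>R snd z))\<^sup>2 = s powr ?p * (norm (snd z))\<^sup>2"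
    using s b0 by (simp add: power_mult_distrib)
  have "gauge \<gamma> (dil \<gamma> s z) = (norm (s *\<^sub>R fst z) powr ?p + (1+\<gamma>)\<^sup>2 * (norm ((s powr (1+\<gamma>)) *\<^sub>R snd z))\<^sup>2) powr (1/?p)"
    by (simp add: gauge_def dil_def)
  also have "\<dots> = (s powr ?p * (norm (fst z) powr ?p + (1 + \<gamma>)\<^sup>2 * (norm (snd z))\<^sup>2)) powr (1 / ?p)"
    by (simp only: a b; simp add: algebra_simps)
  also have "\<dots> = (s powr ?p) powr (1/?p) * gauge \<gamma> z"
    unfolding gauge_def by (rule powr_mult)
  also have "(s powr ?p) powr (1/?p) = s" using s g by (simp add: powr_powr)
  finally show ?thesis .
qed

lemma gradn_dil:
  assumes g: "\<gamma> > 0" and s: "s > 0"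
  shows "grad_gauge_norm \<gamma> (dil \<gamma> s z) = grad_gauge_norm \<gamma> z"
  using s unfolding grad_gauge_norm_def gauge_dil[OF g s]
  by (simp add: dil_def powr_mult gauge_nonneg)

lemma gauge_pow:
  assumes g: "\<gamma> > 0"
  shows "gauge \<gamma> z powr (2*(1+\<gamma>)) = norm (fst z) powr (2*(1+\<gamma>)) + (1 + \<gamma>)\<^sup>2 * (norm (snd z))\<^sup>2"
  using g unfolding gauge_def by (simp add: powr_powr)

lemma gauge_pos: assumes g: "\<gamma> > 0" and "fst z \<noteq> 0" shows "gauge \<gamma> z > 0"
proof -
  have "norm (fst z) powr (2*(1+\<gamma>)) > 0" using assms by simp
  then have "0 < norm (fst z) powr (2*(1+\<gamma>)) + (1 + \<gamma>)\<^sup>2 * (norm (snd z))\<^sup>2"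
    by (rule add_pos_nonneg) simp
  then show ?thesis unfolding gauge_def by simp
qed

lemma grad_lower:
  fixes D :: "(real^'m::finite) \<times> (real^'k::finite) \<Rightarrow> real"
  assumes lin: "linear D" and g: "\<gamma> > 0" and x0: "fst z \<noteq> 0"
  shows "(grad_gauge_norm \<gamma> z)\<^sup>2 * (D (fst z, (1+\<gamma>) *\<^sub>R snd z))\<^sup>2 / (gauge \<gamma> z)\<^sup>2
     \<le> (\<Sum>i\<in>UNIV. (D (axis i 1, 0))\<^sup>2) + norm (fst z) powr (2*\<gamma>) * (\<Sum>j\<in>UNIV. (D (0, axis j 1))\<^sup>2)"
proof -
  obtain x y where z: "z = (x,y)" by (cases z)
  obtain A B where AB: "adjoint D 1 = (A,B)" by (cases "adjoint D 1")
  have Dp: "D (u, v) = u \<bullet> A + v \<bullet> B" for u v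
    using adjoint_works[OF lin, of "(u,v)" 1] by (simp add: AB)
  have dA: "D (axis i 1, 0) = A $ i" for i by (simp add: Dp inner_axis')
  have dB: "D (0, axis i 1) = B $ i" for i by (simp add: Dp inner_axis')
  have sA: "(\<Sum>i\<in>UNIV. (D (axis i 1, 0))\<^sup>2) = A \<bullet> A"
    unfolding dA by (simp add: inner_vec_def power2_eq_square)
  have sB: "(\<Sum>j\<in>UNIV. (D (0, axis j 1))\<^sup>2) = B \<bullet> B"
    unfolding dB by (simp add: inner_vec_def power2_eq_square)
  define n where "n = norm x"
  have n: "n > 0" using x0 z n_def by auto
  define c where "c = (1+\<gamma>) / n powr \<gamma>"
  have npg: "n powr \<gamma> > 0" using n by simp
  have Z: "D (x, (1+\<gamma>) *\<^sub>R y) = (x, c *\<^sub>R y) \<bullet> (A, (n powr \<gamma>) *\<^sub>R B)"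
    using npg by (simp add: Dp c_def)
  have CS: "(D (x, (1+\<gamma>) *\<^sub>R y))\<^sup>2 \<le> ((x, c *\<^sub>R y) \<bullet> (x, c *\<^sub>R y)) * ((A, (n powr \<gamma>) *\<^sub>R B) \<bullet> (A, (n powr \<gamma>) *\<^sub>R B))"
    unfolding Z by (rule Cauchy_Schwarz_ineq)
  define X where "X = (x, c *\<^sub>R y) \<bullet> (x, c *\<^sub>R y)"
  define G where "G = (\<Sum>i\<in>UNIV. (D (axis i 1, 0))\<^sup>2) + norm (fst z) powr (2*\<gamma>) * (\<Sum>j\<in>UNIV. (D (0, axis j 1))\<^sup>2)"
  have n2g: "n powr (2*\<gamma>) = (n powr \<gamma>)\<^sup>2" using n by (simp add: power2_eq_square powr_add[symmetric])
  have GG: "(A, (n powr \<gamma>) *\<^sub>R B) \<bullet> (A, (n powr \<gamma>) *\<^sub>R B) = G"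
    unfolding G_def sA sB using z n_def n2g by (simp add: power2_eq_square)
  have X: "X = n\<^sup>2 + (1+\<gamma>)\<^sup>2 * (y \<bullet> y) / n powr (2*\<gamma>)"
    proof -
    have xx: "x \<bullet> x = n * n" using n_def by (metis power2_eq_square power2_norm_eq_inner)
    show ?thesis unfolding X_def c_def n2g using n_def by (simp add: xx power_divide power2_eq_square)
  qed
  define \<rho> where "\<rho> = gauge \<gamma> z"
  have rp: "\<rho> > 0" using gauge_pos[OF g x0] \<rho>_def by simp
  have P: "\<rho> powr (2*(1+\<gamma>)) = n powr (2*(1+\<gamma>)) + (1 + \<gamma>)\<^sup>2 * (y \<bullet> y)"
    using gauge_pow[OF g, of z] z n_def \<rho>_def by (simp add: power2_norm_eq_inner)
  have h2: "(grad_gauge_norm \<gamma> z)\<^sup>2 = n powr (2*\<gamma>) / \<rho> powr (2*\<gamma>)"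
    unfolding grad_gauge_norm_def using z n_def \<rho>_def rp n
    by (simp add: power_divide power2_eq_square powr_add[symmetric])
  have e1: "n powr (2*(1+\<gamma>)) = n powr 2 * n powr (2*\<gamma>)"
    by (simp add: powr_add[symmetric] algebra_simps)
  have e2: "n powr 2 = n\<^sup>2" using n by simp
  have "n powr (2*\<gamma>) * X = n powr (2*(1+\<gamma>)) + (1 + \<gamma>)\<^sup>2 * (y \<bullet> y)"
    unfolding e1 e2 X using n by (simp add: field_simps)
  also have "\<dots> = \<rho> powr (2*\<gamma>) * \<rho>\<^sup>2"
  proof -
    have e3: "\<rho> powr (2*(1+\<gamma>)) = \<rho> powr 2 * \<rho> powr (2*\<gamma>)"
      by (simp add: powr_add[symmetric] algebra_simps)
    have e4: "\<rho> powr 2 = \<rho>\<^sup>2" using rp by simp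
    show ?thesis using P unfolding e3 e4 by (simp add: mult.commute)
  qed
  finally have key: "(grad_gauge_norm \<gamma> z)\<^sup>2 * X = \<rho>\<^sup>2"
    unfolding h2 using rp by (simp add: field_simps)
  have Gnn: "G \<ge> 0" unfolding GG[symmetric] by simp
  have "(grad_gauge_norm \<gamma> z)\<^sup>2 * (D (fst z, (1+\<gamma>) *\<^sub>R snd z))\<^sup>2 \<le> (grad_gauge_norm \<gamma> z)\<^sup>2 * (X * G)"
    using CS z unfolding X_def GG by (intro mult_left_mono) auto
  also have "\<dots> = \<rho>\<^sup>2 * G" using key by (simp add: algebra_simps)
  finally show ?thesis using rp unfolding G_def \<rho>_def by (simp add: field_simps)
qed

lemma nn_integral_scale_euclid:
  fixes f :: "'a::euclidean_space \<Rightarrow> ennreal"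
  assumes [measurable]: "f \<in> borel_measurable borel" and c: "c > 0"
  shows "(\<integral>\<^sup>+x. f x \<partial>lborel) = ennreal (c ^ DIM('a)) * (\<integral>\<^sup>+x. f (c *\<^sub>R x) \<partial>lborel)"
  using c by (subst lborel_affine[of c 0]) (simp_all add: nn_integral_density nn_integral_distr nn_integral_cmult ennreal_power)

lemma lborel_pair_nn:
  fixes g :: "('a::euclidean_space) \<times> ('b::euclidean_space) \<Rightarrow> ennreal"
  assumes "g \<in> borel_measurable borel"
  shows "(\<integral>\<^sup>+z. g z \<partial>lborel) = (\<integral>\<^sup>+x. \<integral>\<^sup>+y. g (x,y) \<partial>lborel \<partial>lborel)"
proof -
  have "g \<in> borel_measurable (lborel \<Otimes>\<^sub>M lborel)" using assms by (simp add: lborel_prod)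
  then have "(\<integral>\<^sup>+x. \<integral>\<^sup>+y. g (x,y) \<partial>lborel \<partial>lborel) = integral\<^sup>N (lborel \<Otimes>\<^sub>M lborel) g"
    by (rule lborel.nn_integral_fst)
  then show ?thesis by (simp add: lborel_prod)
qed

lemma nn_integral_dil:
  fixes f :: "(real^'m::finite) \<times> (real^'k::finite) \<Rightarrow> ennreal"
  assumes [measurable]: "f \<in> borel_measurable borel" and a: "a>0" and b: "b>0"
  shows "(\<integral>\<^sup>+z. f z \<partial>lborel) = ennreal (a ^ CARD('m) * b ^ CARD('k)) * (\<integral>\<^sup>+z. f (a *\<^sub>R fst z, b *\<^sub>R snd z) \<partial>lborel)"
proof -
  have cl: "(\<lambda>z::(real^'m) \<times> (real^'k). (a *\<^sub>R fst z, b *\<^sub>R snd z)) \<in> borel_measurable borel"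
    by (intro borel_measurable_continuous_onI continuous_intros)
  have mf[measurable]: "(\<lambda>z. f (a *\<^sub>R fst z, b *\<^sub>R snd z)) \<in> borel_measurable borel"
    using measurable_compose[OF cl assms(1)] by (simp add: o_def)
  have "(\<integral>\<^sup>+z. f z \<partial>lborel) = (\<integral>\<^sup>+x. \<integral>\<^sup>+y. f (x,y) \<partial>lborel \<partial>lborel)"
    by (rule lborel_pair_nn[OF assms(1)])
  also have "\<dots> = (\<integral>\<^sup>+x. ennreal (b ^ CARD('k)) * (\<integral>\<^sup>+y. f (x, b *\<^sub>R y) \<partial>lborel) \<partial>lborel)"
  proof (rule nn_integral_cong)
    fix x :: "real^'m"
    have "(\<lambda>y. f (x,y)) \<in> borel_measurable borel"
      using measurable_Pair2[of f borel borel _ x] by (simp add: borel_prod)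
    then show "(\<integral>\<^sup>+y. f (x,y) \<partial>lborel) = ennreal (b ^ CARD('k)) * (\<integral>\<^sup>+y. f (x, b *\<^sub>R y) \<partial>lborel)"
      by (subst nn_integral_scale_euclid[OF _ b]) auto
  qed
  also have "\<dots> = ennreal (b ^ CARD('k)) * (\<integral>\<^sup>+x. (\<integral>\<^sup>+y. f (x, b *\<^sub>R y) \<partial>lborel) \<partial>lborel)"
    by (rule nn_integral_cmult) measurable
  also have "(\<integral>\<^sup>+x. (\<integral>\<^sup>+y. f (x, b *\<^sub>R y) \<partial>lborel) \<partial>lborel) = ennreal (a ^ CARD('m)) * (\<integral>\<^sup>+x. (\<integral>\<^sup>+y. f (a *\<^sub>R x, b *\<^sub>R y) \<partial>lborel) \<partial>lborel)"
    by (subst nn_integral_scale_euclid[OF _ a]) auto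
  also have "(\<integral>\<^sup>+x. (\<integral>\<^sup>+y. f (a *\<^sub>R x, b *\<^sub>R y) \<partial>lborel) \<partial>lborel) = (\<integral>\<^sup>+z. f (a *\<^sub>R fst z, b *\<^sub>R snd z) \<partial>lborel)"
    by (subst lborel_pair_nn[OF mf]) simp
  finally show ?thesis using a b by (simp add: ennreal_mult' mult.assoc mult.left_commute)
qed



lemma alg1:
  fixes P s L \<beta> u v :: real
  assumes s: "s > 0" and L: "L > 0" and P: "P \<ge> 0"
  defines "q \<equiv> \<beta>/2 + 1/(2*L)"
  shows "(\<beta>/2)\<^sup>2 * (P/s*u\<^sup>2) + 1/4 * (P/s*u\<^sup>2/L\<^sup>2)
          + ((-(\<beta>*P/s*q + P*(1/(2* s*L\<^sup>2)))) * u\<^sup>2 + (-(P*q)) * (2*u* v)) \<le> P* s* v\<^sup>2"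
proof -
  have eq: "P* s* v\<^sup>2 - ((\<beta>/2)\<^sup>2 * (P/s*u\<^sup>2) + 1/4 * (P/s*u\<^sup>2/L\<^sup>2)
          + ((-(\<beta>*P/s*q + P*(1/(2* s*L\<^sup>2)))) * u\<^sup>2 + (-(P*q)) * (2*u* v))) = P* s*(v + q*u/s)\<^sup>2"
    using s L unfolding q_def by (simp add: field_simps power2_eq_square)
  have "P* s*(v + q*u/s)\<^sup>2 \<ge> 0" using s P by simp
  then show ?thesis using eq by linarith
qed

lemma hardy1d:
  fixes u u' :: "real \<Rightarrow> real" and \<beta> R \<epsilon> b :: real
  assumes bp: "\<beta> > 0" and e: "0 < \<epsilon>" "\<epsilon> \<le> b" and bR: "b < R"
    and du: "\<And>s. s \<in> {\<epsilon>..b} \<Longrightarrow> (u has_real_derivative u' s) (at s)"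
    and cu': "continuous_on {\<epsilon>..b} u'"
    and ub: "u b = 0"
  shows "(\<lambda>s. (\<beta>/2)\<^sup>2 * (s powr (\<beta>-1) * (u s)\<^sup>2) + 1/4 * (s powr (\<beta>-1) * (u s)\<^sup>2 / (ln (R/s))\<^sup>2)) integrable_on {\<epsilon>..b}"
    and "(\<lambda>s. s powr (\<beta>+1) * (u' s)\<^sup>2) integrable_on {\<epsilon>..b}"
    and "integral {\<epsilon>..b} (\<lambda>s. (\<beta>/2)\<^sup>2 * (s powr (\<beta>-1) * (u s)\<^sup>2) + 1/4 * (s powr (\<beta>-1) * (u s)\<^sup>2 / (ln (R/s))\<^sup>2))
         \<le> integral {\<epsilon>..b} (\<lambda>s. s powr (\<beta>+1) * (u' s)\<^sup>2)"
proof -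
  define L where "L s = ln R - ln s" for s
  define q where "q s = \<beta>/2 + 1/(2 * L s)" for s
  define H where "H s = - (s powr \<beta> * q s)" for s
  define X where "X s = -(\<beta> * s powr \<beta> / s * q s + s powr \<beta> * (1/(2* s*(L s)\<^sup>2)))" for s
  have R0: "R > 0" using e bR by linarith
  have sp: "s > 0" if "s \<in> {\<epsilon>..b}" for s using that e by auto
  have Lp: "L s > 0" if "s \<in> {\<epsilon>..b}" for s
    using that sp[OF that] bR R0 unfolding L_def by (auto simp: ln_less_cancel_iff)
  have Ldiv: "ln (R/s) = L s" if "s \<in> {\<epsilon>..b}" for s
    using sp[OF that] R0 unfolding L_def by (simp add: ln_div)
  have dH: "(H has_real_derivative X s) (at s)" if s: "s \<in> {\<epsilon>..b}" for s
  proof -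
    have s0: "s > 0" using sp[OF s] .
    have L0: "L s > 0" using Lp[OF s] .
    have a: "((\<lambda>s. s powr \<beta>) has_real_derivative \<beta> * s powr \<beta> / s) (at s)"
      using has_real_derivative_powr[OF s0, of \<beta>] s0 by (simp add: powr_diff)
    have dL: "(L has_real_derivative (- inverse s)) (at s)"
      unfolding L_def using s0 by (auto intro!: derivative_eq_intros simp: inverse_eq_divide)
    have b: "(q has_real_derivative (1/(2* s*(L s)\<^sup>2))) (at s)"
      unfolding q_def using s0 L0 dL
      by (auto intro!: derivative_eq_intros simp: field_simps power2_eq_square)
    have "((\<lambda>s. s powr \<beta> * q s) has_real_derivative (\<beta> * s powr \<beta> / s * q s + 1/(2* s*(L s)\<^sup>2) * s powr \<beta>)) (at s)"
      by (rule DERIV_mult[OF a b])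
    from DERIV_minus[OF this] have "(H has_real_derivative - (\<beta> * s powr \<beta> / s * q s + 1/(2* s*(L s)\<^sup>2) * s powr \<beta>)) (at s)"
      unfolding H_def by simp
    then show ?thesis unfolding X_def
      by (rule DERIV_cong) (simp add: algebra_simps)
  qed
  define \<Phi> where "\<Phi> s = H s * (u s)\<^sup>2" for s
  define \<Phi>' where "\<Phi>' s = X s * (u s)\<^sup>2 + H s * (2 * u s * u' s)" for s
  have dPhi: "(\<Phi> has_real_derivative \<Phi>' s) (at s)" if s: "s \<in> {\<epsilon>..b}" for s
  proof -
    have "((\<lambda>s. (u s)\<^sup>2) has_real_derivative 2 * u s * u' s) (at s)"
      using du[OF s] by (auto intro!: derivative_eq_intros)
    from DERIV_mult[OF dH[OF s] this] show ?thesis unfolding \<Phi>_def \<Phi>'_def by (simp add: algebra_simps)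
  qed
  have FTC: "(\<Phi>' has_integral (\<Phi> b - \<Phi> \<epsilon>)) {\<epsilon>..b}"
    using e(2) dPhi
    by (intro fundamental_theorem_of_calculus)
       (auto simp: has_real_derivative_iff_has_vector_derivative[symmetric] intro: has_field_derivative_at_within)
  have Hle: "H \<epsilon> \<le> 0"
    using Lp[of \<epsilon>] e bp unfolding H_def q_def by (auto intro!: mult_nonneg_nonneg add_nonneg_nonneg)
  have val: "\<Phi> b - \<Phi> \<epsilon> \<ge> 0" unfolding \<Phi>_def using ub Hle
    by (simp add: mult_nonpos_nonneg)
  have cu: "continuous_on {\<epsilon>..b} u"
  proof (intro continuous_at_imp_continuous_on ballI)
    fix s assume "s \<in> {\<epsilon>..b}" then show "isCont u s" using du DERIV_isCont by blast
  qed
  define rhs where "rhs s = (\<beta>/2)\<^sup>2 * (s powr (\<beta>-1) * (u s)\<^sup>2) + 1/4 * (s powr (\<beta>-1) * (u s)\<^sup>2 / (ln (R/s))\<^sup>2)" for s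
  define lhs where "lhs s = s powr (\<beta>+1) * (u' s)\<^sup>2" for s
  have crhs: "continuous_on {\<epsilon>..b} rhs"
  proof -
    have "continuous_on {\<epsilon>..b} (\<lambda>s. (\<beta>/2)\<^sup>2 * (s powr (\<beta>-1) * (u s)\<^sup>2) + 1/4 * (s powr (\<beta>-1) * (u s)\<^sup>2 / (L s)\<^sup>2))"
    proof -
      have nz1: "\<forall>s\<in>{\<epsilon>..b}. s \<noteq> 0" using sp by force
      have nz2: "\<forall>s\<in>{\<epsilon>..b}. (L s)\<^sup>2 \<noteq> 0" using Lp by force
      show ?thesis unfolding L_def using nz1 nz2[unfolded L_def] cu
        by (intro continuous_intros) auto
    qed
    then show ?thesis unfolding rhs_def
      by (rule continuous_on_eq) (simp add: Ldiv)
  qed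
  have clhs: "continuous_on {\<epsilon>..b} lhs"
    unfolding lhs_def using sp cu' e by (intro continuous_intros) auto
  have ir: "rhs integrable_on {\<epsilon>..b}" using crhs integrable_continuous_interval by blast
  have il: "lhs integrable_on {\<epsilon>..b}" using clhs integrable_continuous_interval by blast
  show "(\<lambda>s. (\<beta>/2)\<^sup>2 * (s powr (\<beta>-1) * (u s)\<^sup>2) + 1/4 * (s powr (\<beta>-1) * (u s)\<^sup>2 / (ln (R/s))\<^sup>2)) integrable_on {\<epsilon>..b}" using ir by (simp add: rhs_def[abs_def])
  show "(\<lambda>s. s powr (\<beta>+1) * (u' s)\<^sup>2) integrable_on {\<epsilon>..b}" using il by (simp add: lhs_def[abs_def])
  have pw: "rhs s + \<Phi>' s \<le> lhs s" if s: "s \<in> {\<epsilon>..b}" for s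
  proof -
    have s0: "s > 0" using sp[OF s] .
    have p1: "s powr (\<beta>-1) = s powr \<beta> / s" using s0 by (simp add: powr_diff)
    have p2: "s powr (\<beta>+1) = s powr \<beta> * s" using s0 by (simp add: powr_add)
    show ?thesis
      unfolding rhs_def lhs_def \<Phi>'_def X_def H_def Ldiv[OF s] p1 p2
      using alg1[OF s0 Lp[OF s], of "s powr \<beta>" \<beta> "u s" "u' s"] unfolding q_def
      by (simp add: algebra_simps)
  qed
  have "integral {\<epsilon>..b} rhs + (\<Phi> b - \<Phi> \<epsilon>) = integral {\<epsilon>..b} (\<lambda>s. rhs s + \<Phi>' s)"
    using integral_add[OF ir has_integral_integrable[OF FTC]] integral_unique[OF FTC] by simp
  also have "\<dots> \<le> integral {\<epsilon>..b} lhs"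
    by (rule integral_le[OF integrable_add[OF ir has_integral_integrable[OF FTC]] il pw])
  finally have "integral {\<epsilon>..b} rhs \<le> integral {\<epsilon>..b} lhs" using val by linarith
  then show "integral {\<epsilon>..b} (\<lambda>s. (\<beta>/2)\<^sup>2 * (s powr (\<beta>-1) * (u s)\<^sup>2) + 1/4 * (s powr (\<beta>-1) * (u s)\<^sup>2 / (ln (R/s))\<^sup>2))
         \<le> integral {\<epsilon>..b} (\<lambda>s. s powr (\<beta>+1) * (u' s)\<^sup>2)" by (simp add: rhs_def[abs_def] lhs_def[abs_def])
qed



lemma gauge_cont: assumes g: "\<gamma> > 0" shows "continuous_on UNIV (gauge \<gamma> :: (real^'m::finite)\<times>(real^'k::finite) \<Rightarrow> real)"
proof -
  have c1: "continuous_on UNIV (\<lambda>z::(real^'m)\<times>(real^'k). norm (fst z) powr (2 * (1 + \<gamma>)))"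
    using g by (intro continuous_on_powr' continuous_intros) auto
  have c2: "continuous_on UNIV (\<lambda>z::(real^'m)\<times>(real^'k). norm (fst z) powr (2 * (1 + \<gamma>)) + (1 + \<gamma>)\<^sup>2 * (norm (snd z))\<^sup>2)"
    by (intro continuous_intros c1)
  show ?thesis unfolding gauge_def
    using g by (intro continuous_on_powr' c2 continuous_intros) auto
qed

lemma gauge_meas: "\<gamma> > 0 \<Longrightarrow> gauge \<gamma> \<in> borel_measurable borel"
  by (rule borel_measurable_continuous_onI[OF gauge_cont])

lemma gauge_pos2: assumes g: "\<gamma> > 0" and z: "z \<noteq> 0" shows "gauge \<gamma> z > 0"
proof (cases "fst z = 0")
  case False then show ?thesis using gauge_pos[OF g] by blast
next
  case True
  then have "snd z \<noteq> 0" using z by (cases z) (auto simp: zero_prod_def)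
  then have "0 < norm (fst z) powr (2*(1+\<gamma>)) + (1 + \<gamma>)\<^sup>2 * (norm (snd z))\<^sup>2"
    using g by (intro add_nonneg_pos) auto
  then show ?thesis unfolding gauge_def by simp
qed

lemma dil_meas[measurable]:
  "(\<lambda>p::((real^'m::finite)\<times>(real^'k::finite)) \<times> real. dil \<gamma> (snd p) (fst p)) \<in> borel_measurable borel"
proof -
  have "(\<lambda>p::((real^'m::finite)\<times>(real^'k::finite)) \<times> real. dil \<gamma> (snd p) (fst p)) \<in> (borel \<Otimes>\<^sub>M borel) \<Otimes>\<^sub>M borel \<rightarrow>\<^sub>M borel \<Otimes>\<^sub>M borel"
    unfolding dil_def by measurable
  then show ?thesis by (simp add: borel_prod)
qed

lemma int_inv_one:
  assumes r: "\<rho> > 0"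
  shows "(\<integral>\<^sup>+s. indicator {s. 0 < s \<and> s \<le> \<rho> \<and> \<rho> \<le> exp 1 * s} s * ennreal (1/s) \<partial>lborel) = 1"
proof -
  have set: "{s. 0 < s \<and> s \<le> \<rho> \<and> \<rho> \<le> exp 1 * s} = {\<rho>/exp 1..\<rho>}"
    using r by (auto simp: field_simps) (smt (verit) exp_gt_zero mult_nonpos_nonneg)
  have le: "\<rho>/exp 1 \<le> \<rho>" using r by (simp add: field_simps)
  have spos: "s > 0" if "s \<in> {\<rho>/exp 1..\<rho>}" for s
  proof -
    have "s \<ge> \<rho> / exp 1" using that by simp
    moreover have "\<rho> / exp 1 > 0" using r by simp
    ultimately show "s > 0" by linarith
  qed
  have "((\<lambda>s. 1/s) has_integral (ln \<rho> - ln (\<rho>/exp 1))) {\<rho>/exp 1..\<rho>}"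
  proof (rule fundamental_theorem_of_calculus[OF le])
    fix s assume "s \<in> {\<rho>/exp 1..\<rho>}"
    then have "s \<ge> \<rho> / exp 1" by simp
    moreover have "\<rho> / exp 1 > 0" using r by simp
    ultimately have "s > 0" by linarith
    then show "(ln has_vector_derivative 1/s) (at s within {\<rho>/exp 1..\<rho>})"
      by (auto intro!: derivative_eq_intros has_vector_derivative_within_subset[of _ _ _ UNIV]
           simp: has_real_derivative_iff_has_vector_derivative[symmetric] field_simps)
  qed
  moreover have "ln \<rho> - ln (\<rho>/exp 1) = 1" using r by (simp add: ln_div)
  ultimately have hi: "((\<lambda>s. 1/s) has_integral 1) {\<rho>/exp 1..\<rho>}" by simp
  have "(\<integral>\<^sup>+s. ennreal (1/s) * indicator {\<rho>/exp 1..\<rho>} s \<partial>lborel) = ennreal 1"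
    by (rule nn_integral_has_integral_lebesgue'[OF _ hi]) (use spos in \<open>auto simp: less_imp_le\<close>)
  then show ?thesis unfolding set by (simp add: mult.commute)
qed

lemma dil_meas2[measurable]: "(\<lambda>w::(real^'m::finite)\<times>(real^'k::finite). dil \<gamma> s w) \<in> borel_measurable borel"
proof -
  have "(\<lambda>w::(real^'m)\<times>(real^'k). dil \<gamma> s w) \<in> borel \<Otimes>\<^sub>M borel \<rightarrow>\<^sub>M borel \<Otimes>\<^sub>M borel"
    unfolding dil_def by measurable
  then show ?thesis by (simp add: borel_prod)
qed

lemma dil_meas3[measurable]:
  fixes w :: "(real^'m::finite)\<times>(real^'k::finite)"
  shows "(\<lambda>s. dil \<gamma> s w) \<in> borel_measurable borel"
proof -
  have "(\<lambda>s. dil \<gamma> s w) \<in> borel \<rightarrow>\<^sub>M borel \<Otimes>\<^sub>M borel"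
    unfolding dil_def by measurable
  then show ?thesis by (simp add: borel_prod)
qed

lemma dil_pow:
  assumes s: "s > 0"
  shows "s ^ CARD('m) * (s powr (1+\<gamma>)) ^ CARD('k) * (1/s) = s powr (hom_dim \<gamma> TYPE('m::finite) TYPE('k::finite) - 1)"
proof -
  have "s ^ CARD('m) = s powr real CARD('m)" using s by (simp add: powr_realpow)
  moreover have "(s powr (1+\<gamma>)) ^ CARD('k) = s powr (real CARD('k) * (1+\<gamma>))" using s by (simp add: powr_power)
  ultimately show ?thesis using s unfolding hom_dim_def
    by (simp add: powr_diff powr_add[symmetric] algebra_simps)
qed

lemma polar:
  fixes f :: "(real^'m::finite) \<times> (real^'k::finite) \<Rightarrow> ennreal"
  assumes g: "\<gamma> > 0" and fm[measurable]: "f \<in> borel_measurable borel"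
  shows "(\<integral>\<^sup>+z. f z \<partial>lborel) = (\<integral>\<^sup>+w. indicator {w. 1 \<le> gauge \<gamma> w \<and> gauge \<gamma> w \<le> exp 1} w *
           (\<integral>\<^sup>+s. indicator {0<..} s * ennreal (s powr (hom_dim \<gamma> TYPE('m) TYPE('k) - 1)) * f (dil \<gamma> s w) \<partial>lborel) \<partial>lborel)"
proof -
  define Q where "Q = hom_dim \<gamma> TYPE('m) TYPE('k)"
  note gm[measurable] = gauge_meas[OF g]
  define chi :: "(real^'m)\<times>(real^'k) \<Rightarrow> ennreal" where "chi w = indicator {w. 1 \<le> gauge \<gamma> w \<and> gauge \<gamma> w \<le> exp 1} w" for w
  define k :: "(real^'m)\<times>(real^'k) \<Rightarrow> real \<Rightarrow> ennreal"
    where "k z s = indicator {s. 0 < s \<and> s \<le> gauge \<gamma> z \<and> gauge \<gamma> z \<le> exp 1 * s} s * ennreal (1/s)" for z s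
  have chim[measurable]: "chi \<in> borel_measurable borel" unfolding chi_def by measurable
  have fd[measurable]: "(\<lambda>p. f (dil \<gamma> (snd p) (fst p))) \<in> borel_measurable (lborel \<Otimes>\<^sub>M lborel)"
    using measurable_compose[OF dil_meas fm] by (simp add: lborel_prod o_def)
  have step1: "(\<integral>\<^sup>+z. f z \<partial>lborel) = (\<integral>\<^sup>+z. \<integral>\<^sup>+s. k z s * f z \<partial>lborel \<partial>lborel)"
  proof (rule nn_integral_cong_AE)
    show "AE z in lborel. f z = (\<integral>\<^sup>+s. k z s * f z \<partial>lborel)"
      using AE_lborel_singleton[of 0]
    proof (rule AE_mp, intro AE_I2 impI)
      fix z :: "(real^'m)\<times>(real^'k)" assume z: "z \<noteq> 0"
      have "(\<integral>\<^sup>+s. k z s * f z \<partial>lborel) = (\<integral>\<^sup>+s. k z s \<partial>lborel) * f z"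
        by (rule nn_integral_multc) (unfold k_def, measurable)
      also have "(\<integral>\<^sup>+s. k z s \<partial>lborel) = 1"
        unfolding k_def by (rule int_inv_one[OF gauge_pos2[OF g z]])
      finally show "f z = (\<integral>\<^sup>+s. k z s * f z \<partial>lborel)" by simp
    qed
  qed
  have step2: "(\<integral>\<^sup>+z. \<integral>\<^sup>+s. k z s * f z \<partial>lborel \<partial>lborel) = (\<integral>\<^sup>+s. \<integral>\<^sup>+z. k z s * f z \<partial>lborel \<partial>lborel)"
    by (rule lborel_pair.Fubini'[symmetric]) (unfold k_def, measurable)
  have step3: "(\<integral>\<^sup>+z. k z s * f z \<partial>lborel) = indicator {0<..} s * ennreal (s powr (Q-1)) * (\<integral>\<^sup>+w. chi w * f (dil \<gamma> s w) \<partial>lborel)" for s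
  proof (cases "s > 0")
    case False
    then have "k z s = 0" for z unfolding k_def by auto
    then show ?thesis using False by simp
  next
    case True
    have km: "(\<lambda>z. k z s * f z) \<in> borel_measurable borel" unfolding k_def by measurable
    have sp: "s powr (1+\<gamma>) > 0" using True by simp
    have kd: "k (dil \<gamma> s w) s = chi w * ennreal (1/s)" for w
      unfolding k_def chi_def gauge_dil[OF g True] using True by (auto simp: indicator_def)
    have "(\<integral>\<^sup>+z. k z s * f z \<partial>lborel) = ennreal (s ^ CARD('m) * (s powr (1+\<gamma>)) ^ CARD('k)) *
          (\<integral>\<^sup>+w. k (dil \<gamma> s w) s * f (dil \<gamma> s w) \<partial>lborel)"
      using nn_integral_dil[OF km True sp] by (simp add: dil_def)
    also have "(\<integral>\<^sup>+w. k (dil \<gamma> s w) s * f (dil \<gamma> s w) \<partial>lborel) = ennreal (1/s) * (\<integral>\<^sup>+w. chi w * f (dil \<gamma> s w) \<partial>lborel)"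
      unfolding kd by (subst nn_integral_cmult[symmetric]) (measurable, simp add: ac_simps)
    also have "ennreal (s ^ CARD('m) * (s powr (1+\<gamma>)) ^ CARD('k)) * (ennreal (1/s) * (\<integral>\<^sup>+w. chi w * f (dil \<gamma> s w) \<partial>lborel))
       = ennreal (s powr (Q-1)) * (\<integral>\<^sup>+w. chi w * f (dil \<gamma> s w) \<partial>lborel)"
    proof -
      have e: "ennreal (s ^ CARD('m) * (s powr (1+\<gamma>)) ^ CARD('k)) * ennreal (1/s) = ennreal (s powr (Q-1))"
        using dil_pow[OF True, where 'm='m and 'k='k and \<gamma>=\<gamma>] True unfolding Q_def
        by (simp add: ennreal_mult[symmetric])
      show ?thesis by (subst mult.assoc[symmetric], subst e, rule refl)
    qed
    finally show ?thesis using True by simp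
  qed
  have step4: "(\<integral>\<^sup>+s. indicator {0<..} s * ennreal (s powr (Q-1)) * (\<integral>\<^sup>+w. chi w * f (dil \<gamma> s w) \<partial>lborel) \<partial>lborel)
     = (\<integral>\<^sup>+s. \<integral>\<^sup>+w. indicator {0<..} s * ennreal (s powr (Q-1)) * (chi w * f (dil \<gamma> s w)) \<partial>lborel \<partial>lborel)"
    by (rule nn_integral_cong, rule nn_integral_cmult[symmetric]) measurable
  have step5: "(\<integral>\<^sup>+s. \<integral>\<^sup>+w. indicator {0<..} s * ennreal (s powr (Q-1)) * (chi w * f (dil \<gamma> s w)) \<partial>lborel \<partial>lborel)
     = (\<integral>\<^sup>+w. \<integral>\<^sup>+s. indicator {0<..} s * ennreal (s powr (Q-1)) * (chi w * f (dil \<gamma> s w)) \<partial>lborel \<partial>lborel)"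
    by (rule lborel_pair.Fubini') measurable
  have step6: "(\<integral>\<^sup>+w. \<integral>\<^sup>+s. indicator {0<..} s * ennreal (s powr (Q-1)) * (chi w * f (dil \<gamma> s w)) \<partial>lborel \<partial>lborel)
     = (\<integral>\<^sup>+w. chi w * (\<integral>\<^sup>+s. indicator {0<..} s * ennreal (s powr (Q-1)) * f (dil \<gamma> s w) \<partial>lborel) \<partial>lborel)"
    by (rule nn_integral_cong, subst nn_integral_cmult[symmetric]) (measurable, simp add: ac_simps)
  show ?thesis
    unfolding step1 step2 step3 step4 step5 step6 by (simp add: chi_def Q_def)
qed



lemma dil_vderiv:
  assumes s: "s > 0"
  shows "((\<lambda>s. dil \<gamma> s w) has_vector_derivative (fst w, ((1+\<gamma>) * s powr \<gamma>) *\<^sub>R snd w)) (at s)"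
proof -
  have a: "((\<lambda>s. s *\<^sub>R fst w) has_vector_derivative fst w) (at s)"
    by (rule has_vector_derivative_eq_rhs[OF has_vector_derivative_scaleR[OF DERIV_ident has_vector_derivative_const]]) simp
  have p: "((\<lambda>s. s powr (1+\<gamma>)) has_real_derivative ((1+\<gamma>) * s powr \<gamma>)) (at s)"
    using has_real_derivative_powr[OF s, of "1+\<gamma>"] by simp
  have b: "((\<lambda>s. s powr (1+\<gamma>) *\<^sub>R snd w) has_vector_derivative (((1+\<gamma>) * s powr \<gamma>) *\<^sub>R snd w)) (at s)"
    by (rule has_vector_derivative_eq_rhs[OF has_vector_derivative_scaleR[OF p has_vector_derivative_const]]) simp
  show ?thesis unfolding dil_def using has_vector_derivative_Pair[OF a b] by simp
qed

lemma u_deriv: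
  assumes d: "(\<phi> has_derivative D) (at (dil \<gamma> s w))" and s: "s > 0"
  shows "((\<lambda>s. \<phi> (dil \<gamma> s w)) has_real_derivative D (fst w, ((1+\<gamma>) * s powr \<gamma>) *\<^sub>R snd w)) (at s)"
proof -
  let ?v = "(fst w, ((1+\<gamma>) * s powr \<gamma>) *\<^sub>R snd w)"
  have c: "((\<lambda>s. dil \<gamma> s w) has_derivative (\<lambda>h. h *\<^sub>R ?v)) (at s)"
    using dil_vderiv[OF s] unfolding has_vector_derivative_def .
  have "((\<phi> \<circ> (\<lambda>s. dil \<gamma> s w)) has_derivative (D \<circ> (\<lambda>h. h *\<^sub>R ?v))) (at s)"
    by (rule diff_chain_at[OF c d])
  moreover have bl: "linear D" using has_derivative_linear[OF d] .
  moreover have lin: "D (h *\<^sub>R ?v) = h * D ?v" for h using linear_cmul[OF bl, of h ?v] by (simp only: real_scaleR_def)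
  ultimately show ?thesis
    by (intro has_derivative_imp_has_field_derivative[where D="D \<circ> (\<lambda>h. h *\<^sub>R ?v)"])
       (simp_all only: o_def lin)
qed

lemma alg_lhs:
  fixes s \<rho> h G v Q \<alpha> t :: real
  assumes s: "s > 0" and r: "\<rho> > 0" and h: "h > 0"
    and le: "h\<^sup>2 * (s * v)\<^sup>2 / (s * \<rho>)\<^sup>2 \<le> G"
  shows "\<rho> powr (\<alpha>-2) * h powr (t+2) * (s powr (Q + \<alpha> - 2 + 1) * v\<^sup>2) \<le> s powr (Q-1) * ((s*\<rho>) powr \<alpha> * h powr t * G)"
proof -
  define M where "M = s powr (Q-1) * ((s*\<rho>) powr \<alpha> * h powr t)"
  have M0: "M \<ge> 0" unfolding M_def by simp
  have "M * (h\<^sup>2 * (s * v)\<^sup>2 / (s * \<rho>)\<^sup>2) \<le> M * G" using mult_left_mono[OF le M0] .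
  moreover have "M * (h\<^sup>2 * (s * v)\<^sup>2 / (s * \<rho>)\<^sup>2) = \<rho> powr (\<alpha>-2) * h powr (t+2) * (s powr (Q + \<alpha> - 2 + 1) * v\<^sup>2)"
  proof -
    have e1: "s powr (Q + \<alpha> - 2 + 1) = s powr (Q-1) * s powr \<alpha>" by (subst powr_add[symmetric]) (simp add: algebra_simps)
    have e2: "(s*\<rho>) powr \<alpha> = s powr \<alpha> * \<rho> powr \<alpha>" using s r by (simp add: powr_mult)
    have e3: "\<rho> powr (\<alpha>-2) = \<rho> powr \<alpha> / \<rho>\<^sup>2" using r by (simp add: powr_diff)
    have e4: "h powr (t+2) = h powr t * h\<^sup>2" using h by (simp add: powr_add)
    show ?thesis unfolding M_def e1 e2 e3 e4 using s r h by (simp add: field_simps power2_eq_square)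
  qed
  ultimately show ?thesis unfolding M_def by (simp add: mult.assoc)
qed

lemma alg_rhs:
  fixes s \<rho> c hh u Q \<alpha> r :: real
  assumes s: "s > 0" and rp: "\<rho> > 0"
  shows "s powr (Q-1) * (c * ((s*\<rho>) powr (\<alpha>-2) * hh * u\<^sup>2) + 1/4 * ((s*\<rho>) powr (\<alpha>-2) * hh * u\<^sup>2 / (ln (r/(s*\<rho>)))\<^sup>2))
       = (\<rho> powr (\<alpha>-2) * hh) * (c * (s powr (Q + \<alpha> - 2 - 1) * u\<^sup>2) + 1/4 * (s powr (Q + \<alpha> - 2 - 1) * u\<^sup>2 / (ln ((r/\<rho>)/s))\<^sup>2))"
proof -
  have e1: "s powr (Q + \<alpha> - 2 - 1) = s powr (Q-1) * s powr (\<alpha>-2)" by (simp add: powr_add[symmetric])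
  have e2: "(s*\<rho>) powr (\<alpha>-2) = s powr (\<alpha>-2) * \<rho> powr (\<alpha>-2)" by (simp add: powr_mult)
  have e3: "r/(s*\<rho>) = (r/\<rho>)/s" by simp
  show ?thesis unfolding e1 e2 e3 by (simp add: algebra_simps)
qed



lemma perw:
  fixes \<phi> :: "(real^'m::finite) \<times> (real^'k::finite) \<Rightarrow> real" and w :: "(real^'m) \<times> (real^'k)"
    and \<gamma> \<alpha> t r r' :: real
    and F1 gg :: "(real^'m) \<times> (real^'k) \<Rightarrow> ennreal"
  assumes F1_def: "F1 = (\<lambda>z. ennreal (gauge \<gamma> z powr \<alpha> * grad_gauge_norm \<gamma> z powr t * grushin_grad_sq \<gamma> \<phi> z) * indicator (gauge_ball \<gamma> r) z)"
    and gg_def: "gg = (\<lambda>z. ennreal (((hom_dim \<gamma> TYPE('m) TYPE('k) + \<alpha> - 2) / 2)\<^sup>2) *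
              (ennreal (gauge \<gamma> z powr (\<alpha> - 2) * grad_gauge_norm \<gamma> z powr (t + 2) * (\<phi> z)\<^sup>2) * indicator (gauge_ball \<gamma> r) z)
         + ennreal (1/4) *
              (ennreal (gauge \<gamma> z powr (\<alpha> - 2) * grad_gauge_norm \<gamma> z powr (t + 2) * (\<phi> z)\<^sup>2
                       / (ln (r / gauge \<gamma> z))\<^sup>2) * indicator (gauge_ball \<gamma> r) z))"
    and g: "\<gamma> > 0" and bp: "hom_dim \<gamma> TYPE('m) TYPE('k) + \<alpha> - 2 > 0"
    and diff: "\<And>z. (\<phi> has_derivative frechet_derivative \<phi> (at z)) (at z)"
    and cD: "\<And>v. continuous_on UNIV (\<lambda>z. frechet_derivative \<phi> (at z) v)"
    and r'r: "r' < r" and r'0: "0 < r'" and supp: "\<And>z. \<phi> z \<noteq> 0 \<Longrightarrow> gauge \<gamma> z < r'"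
    and w: "gauge \<gamma> w > 0"
    and gm[measurable]: "gg \<in> borel_measurable borel"
  shows "(\<integral>\<^sup>+s. indicator {0<..} s * ennreal (s powr (hom_dim \<gamma> TYPE('m) TYPE('k) - 1)) * gg (dil \<gamma> s w) \<partial>lborel)
       \<le> (\<integral>\<^sup>+s. indicator {0<..} s * ennreal (s powr (hom_dim \<gamma> TYPE('m) TYPE('k) - 1)) * F1 (dil \<gamma> s w) \<partial>lborel)"
proof -
  define Q where "Q = hom_dim \<gamma> TYPE('m) TYPE('k)"
  define \<beta> where "\<beta> = Q + \<alpha> - 2"
  have bp': "\<beta> > 0" using bp by (simp add: \<beta>_def Q_def)
  define \<rho>w where "\<rho>w = gauge \<gamma> w"
  define h where "h = grad_gauge_norm \<gamma> w"
  define K where "K = \<rho>w powr (\<alpha>-2) * h powr (t+2)"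
  define R where "R = r/\<rho>w"
  define b where "b = r'/\<rho>w"
  define u where "u = (\<lambda>s. \<phi> (dil \<gamma> s w))"
  define u' where "u' = (\<lambda>s. frechet_derivative \<phi> (at (dil \<gamma> s w)) (fst w, ((1+\<gamma>) * s powr \<gamma>) *\<^sub>R snd w))"
  define G1 where "G1 = (\<lambda>s. indicator {0<..} s * ennreal (s powr (Q-1)) * F1 (dil \<gamma> s w))"
  define G2 where "G2 = (\<lambda>s. indicator {0<..} s * ennreal (s powr (Q-1)) * gg (dil \<gamma> s w))"
  have rho: "\<rho>w > 0" using w \<rho>w_def by simp
  have b0: "b > 0" using r'0 rho by (simp add: b_def)
  have bR: "b < R" using r'r rho by (simp add: b_def R_def divide_strict_right_mono)
  have brho: "b * \<rho>w = r'" using rho by (simp add: b_def)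
  have gd: "gauge \<gamma> (dil \<gamma> s w) = s * \<rho>w" if "s > 0" for s using gauge_dil[OF g that] \<rho>w_def by simp
  have hd: "grad_gauge_norm \<gamma> (dil \<gamma> s w) = h" if "s > 0" for s using gradn_dil[OF g that] h_def by simp
  have uz: "u s = 0" if "s \<ge> b" for s
  proof (rule ccontr)
    assume "u s \<noteq> 0"
    then have "gauge \<gamma> (dil \<gamma> s w) < r'" using supp u_def by simp
    moreover have "s > 0" using that b0 by simp
    ultimately have "s * \<rho>w < r'" using gd by simp
    moreover have "b * \<rho>w \<le> s * \<rho>w" using that rho by (simp add: mult_right_mono)
    ultimately show False using brho by simp
  qed
  have G2z: "G2 s = 0" if "s \<ge> b" for s
    using uz[OF that] unfolding G2_def gg_def u_def by simp
  have G2m[measurable]: "G2 \<in> borel_measurable borel" unfolding G2_def by measurable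
  have Ieq: "(\<integral>\<^sup>+s. G2 s \<partial>lborel) = (SUP n. \<integral>\<^sup>+s. indicator {1/real (Suc n)..} s * G2 s \<partial>lborel)"
  proof -
    have inc: "incseq (\<lambda>n s. indicator {1/real (Suc n)..} s * G2 s)"
      unfolding incseq_def le_fun_def
    proof (intro allI impI)
      fix n m :: nat and s :: real assume nm: "n \<le> m"
      have "1/real (Suc m) \<le> 1/real (Suc n)" using nm by (simp add: frac_le)
      then show "indicator {1/real (Suc n)..} s * G2 s \<le> indicator {1/real (Suc m)..} s * G2 s"
        by (auto simp: indicator_def)
    qed
    have sup: "(SUP n. indicator {1/real (Suc n)..} s * G2 s) = G2 s" for s
    proof (cases "s > 0")
      case False
      then have "G2 s = 0" unfolding G2_def by simp
      then show ?thesis by simp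
    next
      case True
      obtain N where N: "inverse (real (Suc N)) < s" using reals_Archimedean[OF True] by blast
      show ?thesis
      proof (rule antisym)
        show "(SUP n. indicator {1/real (Suc n)..} s * G2 s) \<le> G2 s"
          by (rule SUP_least) (auto simp: indicator_def)
        have "G2 s = indicator {1/real (Suc N)..} s * G2 s" using N by (simp add: indicator_def inverse_eq_divide)
        also have "\<dots> \<le> (SUP n. indicator {1/real (Suc n)..} s * G2 s)" by (rule SUP_upper) simp
        finally show "G2 s \<le> (SUP n. indicator {1/real (Suc n)..} s * G2 s)" .
      qed
    qed
    have "(\<integral>\<^sup>+s. (SUP n. indicator {1/real (Suc n)..} s * G2 s) \<partial>lborel) = (SUP n. \<integral>\<^sup>+s. indicator {1/real (Suc n)..} s * G2 s \<partial>lborel)"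
      by (rule nn_integral_monotone_convergence_SUP[OF inc]) measurable
    then show ?thesis using sup by simp
  qed
  have main: "(\<integral>\<^sup>+s. G2 s \<partial>lborel) \<le> (\<integral>\<^sup>+s. G1 s \<partial>lborel)"
  proof (cases "fst w = 0")
    case True
    have "h = 0" unfolding h_def grad_gauge_norm_def using True g by simp
    then have "G2 s = 0" for s
      by (cases "s > 0") (simp_all add: G2_def gg_def hd)
    then show ?thesis by simp
  next
    case False
    have hp: "h > 0" unfolding h_def grad_gauge_norm_def using False rho \<rho>w_def by simp
    have K0: "K \<ge> 0" unfolding K_def by simp
    have bl: "linear (frechet_derivative \<phi> (at z))" for z using has_derivative_linear[OF diff] .
    have cdil: "continuous_on {\<epsilon>..b} (\<lambda>s. dil \<gamma> s w)" if "\<epsilon> > 0" for \<epsilon>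
      unfolding dil_def using that by (intro continuous_intros) auto
    have cDd: "continuous_on {\<epsilon>..b} (\<lambda>s. frechet_derivative \<phi> (at (dil \<gamma> s w)) v)" if "\<epsilon> > 0" for \<epsilon> v
      by (rule continuous_on_compose2[OF cD[of v] cdil[OF that]]) auto
    have u'eq: "u' s = frechet_derivative \<phi> (at (dil \<gamma> s w)) (fst w, 0) + ((1+\<gamma>) * s powr \<gamma>) * frechet_derivative \<phi> (at (dil \<gamma> s w)) (0, snd w)" for s
    proof -
      define D where "D = frechet_derivative \<phi> (at (dil \<gamma> s w))"
      define c where "c = (1+\<gamma>) * s powr \<gamma>"
      have e: "(fst w, c *\<^sub>R snd w) = (fst w, 0) + c *\<^sub>R (0, snd w)" by simp
      have "D (fst w, c *\<^sub>R snd w) = D (fst w, 0) + c * D (0, snd w)"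
        unfolding e linear_add[OF bl] linear_cmul[OF bl] D_def by simp
      then show ?thesis unfolding u'_def D_def c_def .
    qed
    have bnd: "(\<integral>\<^sup>+s. indicator {\<epsilon>..} s * G2 s \<partial>lborel) \<le> (\<integral>\<^sup>+s. G1 s \<partial>lborel)" if ep: "\<epsilon> > 0" for \<epsilon>
    proof (cases "\<epsilon> < b")
      case False
      have "(\<lambda>s. indicator {\<epsilon>..} s * G2 s) = (\<lambda>s. 0)"
        using G2z False by (auto simp: indicator_def fun_eq_iff)
      then show ?thesis by simp
    next
      case True
      define rhs1 where "rhs1 = (\<lambda>s. (\<beta>/2)\<^sup>2 * (s powr (\<beta>-1) * (u s)\<^sup>2) + 1/4 * (s powr (\<beta>-1) * (u s)\<^sup>2 / (ln (R/s))\<^sup>2))"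
      define lhs1 where "lhs1 = (\<lambda>s. s powr (\<beta>+1) * (u' s)\<^sup>2)"
      have du: "(u has_real_derivative u' s) (at s)" if "s \<in> {\<epsilon>..b}" for s
        unfolding u_def u'_def by (rule u_deriv[OF diff]) (use that ep in auto)
      have cu': "continuous_on {\<epsilon>..b} u'"
        unfolding u'eq by (intro continuous_intros cDd[OF ep]) (use ep in auto)
      note H = hardy1d[OF bp' ep less_imp_le[OF True] bR du cu' uz[of b, simplified]]
      have ir: "rhs1 integrable_on {\<epsilon>..b}" using H(1) unfolding rhs1_def .
      have il: "lhs1 integrable_on {\<epsilon>..b}" using H(2) unfolding lhs1_def .
      have ineq: "integral {\<epsilon>..b} rhs1 \<le> integral {\<epsilon>..b} lhs1" using H(3) unfolding rhs1_def lhs1_def .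
      have pa: "indicator {\<epsilon>..} s * G2 s = ennreal (K * rhs1 s) * indicator {\<epsilon>..b} s" for s
      proof (cases "s \<in> {\<epsilon>..b}")
        case False
        then show ?thesis
        proof (cases "s < \<epsilon>")
          case True then show ?thesis by (simp add: indicator_def)
        next
          case False
          then have "s \<ge> b" using \<open>s \<notin> {\<epsilon>..b}\<close> by auto
          then show ?thesis using G2z \<open>s \<notin> {\<epsilon>..b}\<close> by (simp add: indicator_def)
        qed
      next
        case True
        have s0: "s > 0" using True ep by auto
        have inball: "dil \<gamma> s w \<in> gauge_ball \<gamma> r"
        proof -
          have "s * \<rho>w \<le> b * \<rho>w" using True rho by (simp add: mult_right_mono)
          then show ?thesis unfolding gauge_ball_def using gd[OF s0] brho r'r by simp
        qed
        define T2 where "T2 = (s*\<rho>w) powr (\<alpha> - 2) * h powr (t + 2) * (u s)\<^sup>2"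
        define T3 where "T3 = T2 / (ln (r / (s*\<rho>w)))\<^sup>2"
        have T2n: "T2 \<ge> 0" unfolding T2_def by simp
        have T3n: "T3 \<ge> 0" unfolding T3_def using T2n by simp
        have ggd: "gg (dil \<gamma> s w) = ennreal ((\<beta>/2)\<^sup>2) * ennreal T2 + ennreal (1/4) * ennreal T3"
          unfolding gg_def T2_def T3_def using inball gd[OF s0] hd[OF s0]
          by (simp add: u_def \<beta>_def Q_def)
        have comb: "ennreal (s powr (Q-1)) * (ennreal ((\<beta>/2)\<^sup>2) * ennreal T2 + ennreal (1/4) * ennreal T3)
             = ennreal (s powr (Q-1) * ((\<beta>/2)\<^sup>2 * T2 + 1/4 * T3))"
        proof -
          have a: "ennreal ((\<beta>/2)\<^sup>2) * ennreal T2 = ennreal ((\<beta>/2)\<^sup>2 * T2)"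
            using T2n by (intro ennreal_mult[symmetric]) auto
          have c: "ennreal (1/4) * ennreal T3 = ennreal (1/4 * T3)"
            using T3n by (intro ennreal_mult[symmetric]) auto
          have p: "ennreal ((\<beta>/2)\<^sup>2 * T2) + ennreal (1/4 * T3) = ennreal ((\<beta>/2)\<^sup>2 * T2 + 1/4 * T3)"
            using T2n T3n by (intro ennreal_plus[symmetric]) auto
          have m: "ennreal (s powr (Q-1)) * ennreal ((\<beta>/2)\<^sup>2 * T2 + 1/4 * T3) = ennreal (s powr (Q-1) * ((\<beta>/2)\<^sup>2 * T2 + 1/4 * T3))"
            by (intro ennreal_mult'[symmetric]) simp
          show ?thesis unfolding a c p m by (rule refl)
        qed
        have alg: "s powr (Q-1) * ((\<beta>/2)\<^sup>2 * T2 + 1/4 * T3) = K * rhs1 s"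
          unfolding T2_def T3_def K_def rhs1_def R_def \<beta>_def
          using alg_rhs[OF s0 rho, of Q "(\<beta>/2)\<^sup>2" \<alpha> "h powr (t+2)" "u s" r] by (simp add: \<beta>_def)
        have "G2 s = ennreal (s powr (Q-1)) * gg (dil \<gamma> s w)" using s0 unfolding G2_def by simp
        also have "\<dots> = ennreal (K * rhs1 s)" unfolding ggd comb alg ..
        finally show ?thesis using True by (simp add: indicator_def)
      qed
      have pd: "ennreal (K * lhs1 s) * indicator {\<epsilon>..b} s \<le> G1 s" for s
      proof (cases "s \<in> {\<epsilon>..b}")
        case False then show ?thesis by simp
      next
        case True
        have s0: "s > 0" using True ep by auto
        have inball: "dil \<gamma> s w \<in> gauge_ball \<gamma> r"
        proof -
          have "s * \<rho>w \<le> b * \<rho>w" using True rho by (simp add: mult_right_mono)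
          then show ?thesis unfolding gauge_ball_def using gd[OF s0] brho r'r by simp
        qed
        define z where "z = dil \<gamma> s w"
        define D where "D = frechet_derivative \<phi> (at z)"
        define GG where "GG = grushin_grad_sq \<gamma> \<phi> z"
        have fz: "fst z \<noteq> 0" unfolding z_def dil_def using False s0 by simp
        have vz: "(fst z, (1+\<gamma>) *\<^sub>R snd z) = s *\<^sub>R (fst w, ((1+\<gamma>) * s powr \<gamma>) *\<^sub>R snd w)"
        proof -
          have "s powr (1+\<gamma>) = s * s powr \<gamma>" using s0 by (simp add: powr_add)
          then show ?thesis unfolding z_def dil_def by (simp add: algebra_simps)
        qed
        have Dz: "D (fst z, (1+\<gamma>) *\<^sub>R snd z) = s * u' s"
        proof -
          define v where "v = (fst w, ((1+\<gamma>) * s powr \<gamma>) *\<^sub>R snd w)"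
          have "D (fst z, (1+\<gamma>) *\<^sub>R snd z) = D (s *\<^sub>R v)" unfolding vz v_def ..
          also have "\<dots> = s * D v" unfolding D_def using linear_cmul[OF bl[of z], of s v] by (simp only: real_scaleR_def)
          finally show ?thesis unfolding u'_def D_def z_def v_def .
        qed
        have gl: "(grad_gauge_norm \<gamma> z)\<^sup>2 * (D (fst z, (1+\<gamma>) *\<^sub>R snd z))\<^sup>2 / (gauge \<gamma> z)\<^sup>2 \<le> GG"
          unfolding GG_def grushin_grad_sq_def D_def by (rule grad_lower[OF bl g fz])
        have le: "h\<^sup>2 * (s * u' s)\<^sup>2 / (s * \<rho>w)\<^sup>2 \<le> GG"
          using gl unfolding Dz unfolding z_def hd[OF s0] gd[OF s0] .
        have real: "K * lhs1 s \<le> s powr (Q-1) * ((s*\<rho>w) powr \<alpha> * h powr t * GG)"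
          using alg_lhs[OF s0 rho hp le, of \<alpha> t Q] unfolding K_def lhs1_def \<beta>_def by (simp add: mult.assoc)
        have F1d: "F1 z = ennreal ((s*\<rho>w) powr \<alpha> * h powr t * GG)"
          unfolding F1_def GG_def using inball gd[OF s0] hd[OF s0] z_def by simp
        have "ennreal (K * lhs1 s) \<le> ennreal (s powr (Q-1) * ((s*\<rho>w) powr \<alpha> * h powr t * GG))"
          using real by (rule ennreal_leI)
        also have "\<dots> = ennreal (s powr (Q-1)) * F1 z" unfolding F1d by (simp add: ennreal_mult')
        finally show ?thesis using True s0 unfolding G1_def z_def by (simp add: indicator_def)
      qed
      have "(\<integral>\<^sup>+s. indicator {\<epsilon>..} s * G2 s \<partial>lborel) = (\<integral>\<^sup>+s. ennreal (K * rhs1 s) * indicator {\<epsilon>..b} s \<partial>lborel)"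
        using pa by simp
      also have "\<dots> = ennreal (integral {\<epsilon>..b} (\<lambda>s. K * rhs1 s))"
      proof (rule nn_integral_has_integral_lebesgue')
        show "((\<lambda>s. K * rhs1 s) has_integral integral {\<epsilon>..b} (\<lambda>s. K * rhs1 s)) {\<epsilon>..b}"
        proof -
          have "(\<lambda>s. K * rhs1 s) integrable_on {\<epsilon>..b}" using integrable_on_cmult_left[OF ir, of K] by simp
          then show ?thesis by (rule integrable_integral)
        qed
        show "0 \<le> K * rhs1 s" if "s \<in> {\<epsilon>..b}" for s using K0 unfolding rhs1_def by simp
      qed
      also have "\<dots> \<le> ennreal (integral {\<epsilon>..b} (\<lambda>s. K * lhs1 s))"
        using ineq K0 by (intro ennreal_leI) (simp add: mult_left_mono)
      also have "\<dots> = (\<integral>\<^sup>+s. ennreal (K * lhs1 s) * indicator {\<epsilon>..b} s \<partial>lborel)"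
      proof (rule nn_integral_has_integral_lebesgue'[symmetric])
        show "((\<lambda>s. K * lhs1 s) has_integral integral {\<epsilon>..b} (\<lambda>s. K * lhs1 s)) {\<epsilon>..b}"
        proof -
          have "(\<lambda>s. K * lhs1 s) integrable_on {\<epsilon>..b}" using integrable_on_cmult_left[OF il, of K] by simp
          then show ?thesis by (rule integrable_integral)
        qed
        show "0 \<le> K * lhs1 s" if "s \<in> {\<epsilon>..b}" for s using K0 unfolding lhs1_def by simp
      qed
      also have "\<dots> \<le> (\<integral>\<^sup>+s. G1 s \<partial>lborel)" by (rule nn_integral_mono) (rule pd)
      finally show ?thesis .
    qed
    show ?thesis unfolding Ieq by (rule SUP_least, rule bnd) simp
  qed
  then show ?thesis unfolding G1_def G2_def Q_def .
qed



theorem theorem3p2: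
  fixes \<gamma> \<alpha> t r :: real and \<phi> :: "(real^'m::finite) \<times> (real^'k::finite) \<Rightarrow> real"
  assumes "\<gamma> > 0"
    and "hom_dim \<gamma> TYPE('m) TYPE('k) + \<alpha> - 2 > 0"
    and "r > 0"
    and "C0_infty (gauge_ball \<gamma> r) \<phi>"
  shows "(\<integral>\<^sup>+ z \<in> gauge_ball \<gamma> r.
            ennreal (gauge \<gamma> z powr \<alpha> * grad_gauge_norm \<gamma> z powr t * grushin_grad_sq \<gamma> \<phi> z) \<partial>lborel)
       \<ge> ennreal (((hom_dim \<gamma> TYPE('m) TYPE('k) + \<alpha> - 2) / 2)\<^sup>2) *
           (\<integral>\<^sup>+ z \<in> gauge_ball \<gamma> r.
              ennreal (gauge \<gamma> z powr (\<alpha> - 2) * grad_gauge_norm \<gamma> z powr (t + 2) * (\<phi> z)\<^sup>2) \<partial>lborel)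
         + ennreal (1/4) *
           (\<integral>\<^sup>+ z \<in> gauge_ball \<gamma> r.
              ennreal (gauge \<gamma> z powr (\<alpha> - 2) * grad_gauge_norm \<gamma> z powr (t + 2) * (\<phi> z)\<^sup>2
                       / (ln (r / gauge \<gamma> z))\<^sup>2) \<partial>lborel)"
proof -
  note g = assms(1) and bp = assms(2) and r = assms(3) and C = assms(4)
  have ck1: "Ck_fun (Suc 0) \<phi>" using C unfolding C0_infty_def smooth_fun_def by blast
  have ck: "continuous_on UNIV \<phi> \<and> \<phi> differentiable_on UNIV \<and> (\<forall>v. Ck_fun 0 (\<lambda>z. frechet_derivative \<phi> (at z) v))"
    using Ck_fun.simps(2)[of 0 \<phi>] ck1 by (rule iffD1)
  have cphi: "continuous_on UNIV \<phi>" using ck by blast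
  have dphi: "\<phi> differentiable_on UNIV" using ck by blast
  have cD: "continuous_on UNIV (\<lambda>z. frechet_derivative \<phi> (at z) v)" for v
  proof -
    have "Ck_fun 0 (\<lambda>z. frechet_derivative \<phi> (at z) v)" using ck by blast
    then show ?thesis by (metis Ck_fun.simps(1))
  qed
  have diff: "(\<phi> has_derivative frechet_derivative \<phi> (at z)) (at z)" for z
  proof -
    have "\<forall>x\<in>UNIV. \<phi> differentiable (at x within UNIV)" using dphi unfolding differentiable_on_def .
    then have "\<phi> differentiable (at z)" by blast
    then show ?thesis unfolding frechet_derivative_works .
  qed
  define S where "S = closure {z. \<phi> z \<noteq> 0}"
  have Sc: "compact S" and Sb: "S \<subseteq> gauge_ball \<gamma> r" using C unfolding C0_infty_def S_def by blast+
  have inS: "z \<in> S" if "\<phi> z \<noteq> 0" for z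
  proof -
    have "z \<in> {z. \<phi> z \<noteq> 0}" using that by simp
    then show ?thesis unfolding S_def by (rule subsetD[OF closure_subset])
  qed
  obtain r' where r'r: "r' < r" and r'0: "0 < r'" and supp: "\<And>z. \<phi> z \<noteq> 0 \<Longrightarrow> gauge \<gamma> z < r'"
  proof (cases "S = {}")
    case True
    show ?thesis
    proof (rule that[of "r/2"])
      show "r/2 < r" "0 < r/2" using r by auto
      fix z assume "\<phi> z \<noteq> 0" then have "z \<in> S" by (rule inS)
      then show "gauge \<gamma> z < r/2" using True by simp
    qed
  next
    case False
    obtain x0 where x0: "x0 \<in> S" and mx: "\<And>y. y \<in> S \<Longrightarrow> gauge \<gamma> y \<le> gauge \<gamma> x0"
      using continuous_attains_sup[OF Sc False continuous_on_subset[OF gauge_cont[OF g] subset_UNIV]] by blast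
    have lt: "gauge \<gamma> x0 < r" using x0 Sb unfolding gauge_ball_def by auto
    have ge: "gauge \<gamma> x0 \<ge> 0" by (rule gauge_nonneg)
    show ?thesis
    proof (rule that[of "(gauge \<gamma> x0 + r)/2"])
      show "(gauge \<gamma> x0 + r)/2 < r" "0 < (gauge \<gamma> x0 + r)/2" using lt ge r by auto
      fix z assume "\<phi> z \<noteq> 0" then have "z \<in> S" by (rule inS)
      then have "gauge \<gamma> z \<le> gauge \<gamma> x0" by (rule mx)
      then show "gauge \<gamma> z < (gauge \<gamma> x0 + r)/2" using lt by simp
    qed
  qed
  have phim[measurable]: "\<phi> \<in> borel_measurable borel" by (rule borel_measurable_continuous_onI[OF cphi])
  have Dm[measurable]: "(\<lambda>z. frechet_derivative \<phi> (at z) v) \<in> borel_measurable borel" for v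
    by (rule borel_measurable_continuous_onI[OF cD])
  note gm[measurable] = gauge_meas[OF g]
  have nfm[measurable]: "(\<lambda>z::(real^'m)\<times>(real^'k). norm (fst z)) \<in> borel_measurable borel"
    by (intro borel_measurable_continuous_onI continuous_intros)
  define F1 where "F1 = (\<lambda>z. ennreal (gauge \<gamma> z powr \<alpha> * grad_gauge_norm \<gamma> z powr t * grushin_grad_sq \<gamma> \<phi> z) * indicator (gauge_ball \<gamma> r) z)"
  define A where "A = (\<lambda>z. ennreal (gauge \<gamma> z powr (\<alpha> - 2) * grad_gauge_norm \<gamma> z powr (t + 2) * (\<phi> z)\<^sup>2) * indicator (gauge_ball \<gamma> r) z)"
  define B where "B = (\<lambda>z. ennreal (gauge \<gamma> z powr (\<alpha> - 2) * grad_gauge_norm \<gamma> z powr (t + 2) * (\<phi> z)\<^sup>2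
                       / (ln (r / gauge \<gamma> z))\<^sup>2) * indicator (gauge_ball \<gamma> r) z)"
  define c2 where "c2 = ennreal (((hom_dim \<gamma> TYPE('m) TYPE('k) + \<alpha> - 2) / 2)\<^sup>2)"
  define gg where "gg = (\<lambda>z. ennreal (((hom_dim \<gamma> TYPE('m) TYPE('k) + \<alpha> - 2) / 2)\<^sup>2) *
              (ennreal (gauge \<gamma> z powr (\<alpha> - 2) * grad_gauge_norm \<gamma> z powr (t + 2) * (\<phi> z)\<^sup>2) * indicator (gauge_ball \<gamma> r) z)
         + ennreal (1/4) *
              (ennreal (gauge \<gamma> z powr (\<alpha> - 2) * grad_gauge_norm \<gamma> z powr (t + 2) * (\<phi> z)\<^sup>2
                       / (ln (r / gauge \<gamma> z))\<^sup>2) * indicator (gauge_ball \<gamma> r) z))"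
  have gg_eq: "gg = (\<lambda>z. c2 * A z + ennreal (1/4) * B z)" unfolding gg_def c2_def A_def B_def ..
  have ballm[measurable]: "gauge_ball \<gamma> r \<in> sets borel" unfolding gauge_ball_def by measurable
  have F1m[measurable]: "F1 \<in> borel_measurable borel"
    unfolding F1_def grad_gauge_norm_def grushin_grad_sq_def by measurable
  have Am[measurable]: "A \<in> borel_measurable borel" unfolding A_def grad_gauge_norm_def by measurable
  have Bm[measurable]: "B \<in> borel_measurable borel" unfolding B_def grad_gauge_norm_def by measurable
  have ggm[measurable]: "gg \<in> borel_measurable borel" unfolding gg_eq by measurable
  have pw: "(\<integral>\<^sup>+s. indicator {0<..} s * ennreal (s powr (hom_dim \<gamma> TYPE('m) TYPE('k) - 1)) * gg (dil \<gamma> s w) \<partial>lborel)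
       \<le> (\<integral>\<^sup>+s. indicator {0<..} s * ennreal (s powr (hom_dim \<gamma> TYPE('m) TYPE('k) - 1)) * F1 (dil \<gamma> s w) \<partial>lborel)"
    if wp: "gauge \<gamma> w > 0" for w
    by (rule perw[OF F1_def gg_def g bp diff cD r'r r'0 supp wp ggm])
  have "(\<integral>\<^sup>+z. gg z \<partial>lborel) \<le> (\<integral>\<^sup>+z. F1 z \<partial>lborel)"
    unfolding polar[OF g ggm] polar[OF g F1m]
  proof (rule nn_integral_mono)
    fix w :: "(real^'m) \<times> (real^'k)"
    show "indicator {w. 1 \<le> gauge \<gamma> w \<and> gauge \<gamma> w \<le> exp 1} w *
           (\<integral>\<^sup>+s. indicator {0<..} s * ennreal (s powr (hom_dim \<gamma> TYPE('m) TYPE('k) - 1)) * gg (dil \<gamma> s w) \<partial>lborel)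
       \<le> indicator {w. 1 \<le> gauge \<gamma> w \<and> gauge \<gamma> w \<le> exp 1} w *
           (\<integral>\<^sup>+s. indicator {0<..} s * ennreal (s powr (hom_dim \<gamma> TYPE('m) TYPE('k) - 1)) * F1 (dil \<gamma> s w) \<partial>lborel)"
    proof (cases "1 \<le> gauge \<gamma> w")
      case True
      then have "gauge \<gamma> w > 0" by linarith
      then show ?thesis by (intro mult_left_mono pw) auto
    next
      case False then show ?thesis by simp
    qed
  qed
  also have "(\<integral>\<^sup>+z. gg z \<partial>lborel) = c2 * (\<integral>\<^sup>+z. A z \<partial>lborel) + ennreal (1/4) * (\<integral>\<^sup>+z. B z \<partial>lborel)"
    unfolding gg_eq by (simp add: nn_integral_add nn_integral_cmult)
  finally show ?thesis by (simp only: F1_def A_def B_def c2_def)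
qed


end
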